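(* Let $G$ be a finite simple connected graph with no $K_5$ minor, not isomorphic to $C_5$, that has no dynamic $4$-coloring, and suppose $G$ has the minimum number of edges among all such graphs (i.e., every finite simple connected graph with no $K_5$ minor, not isomorphic to $C_5$, and with fewer edges than $G$ is dynamically $4$-colorable). Then $G$ is $2$-connected.
   Context: All graphs are finite and simple. Given a proper vertex coloring of a graph, a vertex $v$ is happy if either $v$ has at most one neighbor or $v$ has two neighbors receiving distinct colors. A dynamic $4$-coloring is a proper vertex coloring with at most $4$ colors in which every vertex is happy. *)

theory Defs
  imports Main
begin

definition simple_graph :: "'a set \<Rightarrow> 'a set set \<Rightarrow> bool" where
  "simple_graph V E \<longleftrightarrow> finite V \<and>
     (\<forall>e\<in>E. \<exists>u v. e = {u, v} \<and> u \<in> V \<and> v \<in> V \<and> u \<noteq> v)"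

definition neighbors :: "'a set set \<Rightarrow> 'a \<Rightarrow> 'a set" where
  "neighbors E v = {u. {u, v} \<in> E}"

definition connected_in :: "'a set set \<Rightarrow> 'a set \<Rightarrow> bool" where
  "connected_in E S \<longleftrightarrow> S \<noteq> {} \<and>
     (\<forall>u\<in>S. \<forall>v\<in>S. (\<lambda>x y. x \<in> S \<and> y \<in> S \<and> {x, y} \<in> E)\<^sup>*\<^sup>* u v)"

definition connected_graph :: "'a set \<Rightarrow> 'a set set \<Rightarrow> bool" where
  "connected_graph V E \<longleftrightarrow> connected_in E V"

definition del_vertex :: "'a set \<Rightarrow> 'a set set \<Rightarrow> 'a \<Rightarrow> 'a set \<times> 'a set set" where
  "del_vertex V E x = (V - {x}, {e \<in> E. x \<notin> e})"

definition two_connected :: "'a set \<Rightarrow> 'a set set \<Rightarrow> bool" where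
  "two_connected V E \<longleftrightarrow> card V > 2 \<and> connected_graph V E \<and>
     (\<forall>x\<in>V. connected_graph (fst (del_vertex V E x)) (snd (del_vertex V E x)))"

definition is_minor :: "'b set \<Rightarrow> 'b set set \<Rightarrow> 'a set \<Rightarrow> 'a set set \<Rightarrow> bool" where
  "is_minor W F V E \<longleftrightarrow> (\<exists>B :: 'b \<Rightarrow> 'a set.
     (\<forall>w\<in>W. B w \<subseteq> V \<and> connected_in E (B w)) \<and>
     (\<forall>w\<in>W. \<forall>w'\<in>W. w \<noteq> w' \<longrightarrow> B w \<inter> B w' = {}) \<and>
     (\<forall>w\<in>W. \<forall>w'\<in>W. {w, w'} \<in> F \<longrightarrow> (\<exists>u\<in>B w. \<exists>v\<in>B w'. {u, v} \<in> E)))"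

definition K5_verts :: "nat set" where "K5_verts = {0..<5}"
definition K5_edges :: "nat set set" where
  "K5_edges = {{i, j} | i j. i < 5 \<and> j < 5 \<and> i \<noteq> j}"

definition C5_verts :: "nat set" where "C5_verts = {0..<5}"
definition C5_edges :: "nat set set" where
  "C5_edges = {{i, (i + 1) mod 5} | i. i < 5}"

definition has_K5_minor :: "'a set \<Rightarrow> 'a set set \<Rightarrow> bool" where
  "has_K5_minor V E \<longleftrightarrow> is_minor K5_verts K5_edges V E"

definition graph_iso :: "'a set \<Rightarrow> 'a set set \<Rightarrow> 'b set \<Rightarrow> 'b set set \<Rightarrow> bool" where
  "graph_iso V E W F \<longleftrightarrow> (\<exists>f. bij_betw f V W \<and>
     (\<forall>u\<in>V. \<forall>v\<in>V. {u, v} \<in> E \<longleftrightarrow> {f u, f v} \<in> F))"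

definition iso_C5 :: "'a set \<Rightarrow> 'a set set \<Rightarrow> bool" where
  "iso_C5 V E \<longleftrightarrow> graph_iso V E C5_verts C5_edges"

definition dynamic_4_coloring :: "'a set \<Rightarrow> 'a set set \<Rightarrow> ('a \<Rightarrow> nat) \<Rightarrow> bool" where
  "dynamic_4_coloring V E c \<longleftrightarrow>
     (\<forall>v\<in>V. c v < 4) \<and>
     (\<forall>u\<in>V. \<forall>v\<in>V. {u, v} \<in> E \<longrightarrow> c u \<noteq> c v) \<and>
     (\<forall>v\<in>V. card (neighbors E v) \<le> 1 \<or>
        (\<exists>u\<in>neighbors E v. \<exists>w\<in>neighbors E v. c u \<noteq> c w))"

definition dyn4_colorable :: "'a set \<Rightarrow> 'a set set \<Rightarrow> bool" where
  "dyn4_colorable V E \<longleftrightarrow> (\<exists>c. dynamic_4_coloring V E c)"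

end

theory Submission
  imports Defs
begin


lemma rtp_map:
  assumes "R\<^sup>*\<^sup>* a b" "\<And>x y. R x y \<Longrightarrow> Q (f x) (f y)"
  shows "Q\<^sup>*\<^sup>* (f a) (f b)"
  using assms(1) by (induction rule: rtranclp_induct) (auto intro: rtranclp.rtrancl_into_rtrancl assms(2))

lemma rtp_sym:
  assumes "R\<^sup>*\<^sup>* a b" "\<And>x y. R x y \<Longrightarrow> R y x"
  shows "R\<^sup>*\<^sup>* b a"
  using assms(1) by (induction rule: rtranclp_induct) (auto intro: converse_rtranclp_into_rtranclp assms(2))

lemma edge_distinct:
  assumes "simple_graph V E" "{a,b} \<in> E" shows "a \<noteq> b" "a \<in> V" "b \<in> V"
proof -
  obtain u v where "{a,b} = {u,v}" "u \<in> V" "v \<in> V" "u \<noteq> v"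
    using assms unfolding simple_graph_def by blast
  thus "a \<noteq> b" "a \<in> V" "b \<in> V" by (auto simp: doubleton_eq_iff)
qed

lemma edge_sub:
  assumes "simple_graph V E" "e \<in> E" shows "e \<subseteq> V"
proof -
  obtain u v where "e = {u,v}" "u \<in> V" "v \<in> V"
    using assms unfolding simple_graph_def by blast
  thus ?thesis by simp
qed

lemma minor_hom:
  assumes "is_minor W F V' E'" "inj_on h V'" "h ` V' \<subseteq> V"
    "\<And>x y. x \<in> V' \<Longrightarrow> y \<in> V' \<Longrightarrow> {x,y} \<in> E' \<Longrightarrow> {h x, h y} \<in> E"
  shows "is_minor W F V E"
proof -
  obtain B where B1: "\<forall>w\<in>W. B w \<subseteq> V' \<and> connected_in E' (B w)"
    and B2: "\<forall>w\<in>W. \<forall>w'\<in>W. w \<noteq> w' \<longrightarrow> B w \<inter> B w' = {}"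
    and B3: "\<forall>w\<in>W. \<forall>w'\<in>W. {w, w'} \<in> F \<longrightarrow> (\<exists>u\<in>B w. \<exists>v\<in>B w'. {u, v} \<in> E')"
    using assms(1) unfolding is_minor_def by blast
  show ?thesis unfolding is_minor_def
  proof (intro exI[of _ "\<lambda>w. h ` B w"] conjI ballI impI)
    fix w assume w: "w \<in> W"
    show "h ` B w \<subseteq> V" using B1 w assms(3) by blast
    show "connected_in E (h ` B w)"
      unfolding connected_in_def
    proof (intro conjI ballI)
      show "h ` B w \<noteq> {}" using B1 w unfolding connected_in_def by auto
      fix a b assume "a \<in> h ` B w" "b \<in> h ` B w"
      then obtain a' b' where ab: "a' \<in> B w" "b' \<in> B w" "a = h a'" "b = h b'" by blast
      have "(\<lambda>x y. x \<in> B w \<and> y \<in> B w \<and> {x, y} \<in> E')\<^sup>*\<^sup>* a' b'"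
        using B1 w ab unfolding connected_in_def by blast
      then show "(\<lambda>x y. x \<in> h ` B w \<and> y \<in> h ` B w \<and> {x, y} \<in> E)\<^sup>*\<^sup>* a b"
        unfolding ab
        by (rule rtp_map) (use B1 w assms(4) in blast)
    qed
  next
    fix w w' assume w: "w \<in> W" "w' \<in> W" "w \<noteq> w'"
    have "B w \<inter> B w' = {}" using B2 w by blast
    moreover have "B w \<subseteq> V'" "B w' \<subseteq> V'" using B1 w by auto
    ultimately show "h ` B w \<inter> h ` B w' = {}"
      using assms(2) by (metis image_empty inj_on_image_Int)
  next
    fix w w' assume w: "w \<in> W" "w' \<in> W" "{w,w'} \<in> F"
    then obtain u v where "u \<in> B w" "v \<in> B w'" "{u,v} \<in> E'" using B3 by blast
    then show "\<exists>u\<in>h ` B w. \<exists>v\<in>h ` B w'. {u, v} \<in> E"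
      using B1 w assms(4) by blast
  qed
qed



lemma transfer_nat:
  fixes V :: "'a set" and E :: "'a set set"
  assumes sg: "simple_graph V E" and cg: "connected_graph V E"
    and nk: "\<not> has_K5_minor V E" and nc: "\<not> iso_C5 V E"
    and IH: "\<forall>(V' :: nat set) (E' :: nat set set).
           simple_graph V' E' \<and> connected_graph V' E' \<and> \<not> has_K5_minor V' E' \<and>
           \<not> iso_C5 V' E' \<and> card E' < n \<longrightarrow> dyn4_colorable V' E'"
    and lt: "card E < n"
  shows "dyn4_colorable V E"
proof -
  have fin: "finite V" using sg unfolding simple_graph_def by blast
  obtain g :: "'a \<Rightarrow> nat" and m where g: "g ` V = {i. i < m}" "inj_on g V"
    using finite_imp_inj_to_nat_seg[OF fin] by blast
  define V' where "V' = g ` V"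
  define E' where "E' = (\<lambda>e. g ` e) ` E"
  have Esub: "\<And>e. e \<in> E \<Longrightarrow> e \<subseteq> V" using edge_sub[OF sg] by blast
  have T1: "{g a, g b} \<in> E' \<longleftrightarrow> {a,b} \<in> E" if "a \<in> V" "b \<in> V" for a b
  proof
    assume ab: "{a,b} \<in> E"
    have "(\<lambda>e. g ` e) {a,b} \<in> E'" unfolding E'_def using ab by (rule imageI)
    then show "{g a, g b} \<in> E'" by simp
  next
    assume "{g a, g b} \<in> E'"
    then obtain e where e: "e \<in> E" "g ` e = {g a, g b}" unfolding E'_def by blast
    have "g ` e = g ` {a,b}" using e by simp
    moreover have "{a,b} \<subseteq> V" using that by simp
    ultimately have "e = {a,b}" using inj_on_image_eq_iff[OF g(2) Esub[OF e(1)], of "{a,b}"] by simp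
    then show "{a,b} \<in> E" using e by simp
  qed
  have E'form: "\<And>e'. e' \<in> E' \<Longrightarrow> \<exists>p q. e' = {g p, g q} \<and> p \<in> V \<and> q \<in> V \<and> p \<noteq> q"
  proof -
    fix e' assume "e' \<in> E'"
    then obtain e where e: "e \<in> E" "e' = g ` e" unfolding E'_def by blast
    then obtain p q where "e = {p,q}" "p \<in> V" "q \<in> V" "p \<noteq> q"
      using sg unfolding simple_graph_def by blast
    then show "\<exists>p q. e' = {g p, g q} \<and> p \<in> V \<and> q \<in> V \<and> p \<noteq> q" using e by auto
  qed
  have sg': "simple_graph V' E'"
    unfolding simple_graph_def
  proof (intro conjI ballI)
    show "finite V'" unfolding V'_def using fin by simp
    fix e' assume "e' \<in> E'"
    then obtain p q where "e' = {g p, g q}" "p \<in> V" "q \<in> V" "p \<noteq> q" using E'form by blast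
    then show "\<exists>u v. e' = {u, v} \<and> u \<in> V' \<and> v \<in> V' \<and> u \<noteq> v"
      unfolding V'_def using g(2) by (metis image_eqI inj_on_contraD)
  qed
  have cg': "connected_graph V' E'"
    unfolding connected_graph_def connected_in_def
  proof (intro conjI ballI)
    show "V' \<noteq> {}" using cg unfolding V'_def connected_graph_def connected_in_def by simp
    fix a' b' assume "a' \<in> V'" "b' \<in> V'"
    then obtain a b where ab: "a \<in> V" "b \<in> V" "a' = g a" "b' = g b" unfolding V'_def by blast
    have "(\<lambda>x y. x \<in> V \<and> y \<in> V \<and> {x, y} \<in> E)\<^sup>*\<^sup>* a b"
      using cg ab unfolding connected_graph_def connected_in_def by blast
    then show "(\<lambda>x y. x \<in> V' \<and> y \<in> V' \<and> {x, y} \<in> E')\<^sup>*\<^sup>* a' b'"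
      unfolding ab by (rule rtp_map) (use T1 in \<open>auto simp: V'_def\<close>)
  qed
  define h where "h = inv_into V g"
  have hg: "\<And>x. x \<in> V \<Longrightarrow> h (g x) = x" unfolding h_def using g(2) by simp
  have nk': "\<not> has_K5_minor V' E'"
  proof
    assume "has_K5_minor V' E'"
    then have "is_minor K5_verts K5_edges V' E'" unfolding has_K5_minor_def .
    moreover have "inj_on h V'" unfolding h_def V'_def by (rule inj_on_inv_into) simp
    moreover have "h ` V' \<subseteq> V" unfolding V'_def using hg by auto
    moreover have "\<And>x y. x \<in> V' \<Longrightarrow> y \<in> V' \<Longrightarrow> {x,y} \<in> E' \<Longrightarrow> {h x, h y} \<in> E"
      unfolding V'_def using T1 hg by auto
    ultimately have "is_minor K5_verts K5_edges V E" by (rule minor_hom)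
    then show False using nk unfolding has_K5_minor_def by simp
  qed
  have nc': "\<not> iso_C5 V' E'"
  proof
    assume "iso_C5 V' E'"
    then obtain f where f: "bij_betw f V' C5_verts"
      "\<forall>u\<in>V'. \<forall>v\<in>V'. {u, v} \<in> E' \<longleftrightarrow> {f u, f v} \<in> C5_edges"
      unfolding iso_C5_def graph_iso_def by blast
    have "bij_betw g V V'" unfolding V'_def using g(2) by (simp add: inj_on_imp_bij_betw)
    then have "bij_betw (f \<circ> g) V C5_verts" using f(1) by (rule bij_betw_trans)
    moreover have "\<forall>u\<in>V. \<forall>v\<in>V. {u, v} \<in> E \<longleftrightarrow> {(f \<circ> g) u, (f \<circ> g) v} \<in> C5_edges"
      using f(2) T1 unfolding V'_def by auto
    ultimately have "iso_C5 V E" unfolding iso_C5_def graph_iso_def by blast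
    then show False using nc by simp
  qed
  have card': "card E' = card E"
    unfolding E'_def
  proof (rule card_image)
    show "inj_on ((`) g) E"
      using inj_on_image_eq_iff[OF g(2)] Esub unfolding inj_on_def by blast
  qed
  have "dyn4_colorable V' E'" using IH sg' cg' nk' nc' card' lt by auto
  then obtain c' where c': "dynamic_4_coloring V' E' c'" unfolding dyn4_colorable_def by blast
  have nb: "neighbors E' (g v) = g ` neighbors E v" if v: "v \<in> V" for v
  proof
    show "neighbors E' (g v) \<subseteq> g ` neighbors E v"
    proof
      fix u' assume "u' \<in> neighbors E' (g v)"
      then have u': "{u', g v} \<in> E'" unfolding neighbors_def by simp
      then have "u' \<in> V'" using edge_distinct(2)[OF sg'] by blast
      then obtain u where "u \<in> V" "u' = g u" unfolding V'_def by blast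
      then show "u' \<in> g ` neighbors E v" using u' T1 v unfolding neighbors_def by auto
    qed
  next
    show "g ` neighbors E v \<subseteq> neighbors E' (g v)"
      unfolding neighbors_def using T1 v edge_distinct(2)[OF sg] by auto
  qed
  have nbV: "neighbors E v \<subseteq> V" for v unfolding neighbors_def using edge_distinct(2)[OF sg] by auto
  have "dynamic_4_coloring V E (c' \<circ> g)"
    unfolding dynamic_4_coloring_def
  proof (intro conjI ballI impI)
    fix v assume "v \<in> V" then show "(c' \<circ> g) v < 4" using c' unfolding dynamic_4_coloring_def V'_def by auto
  next
    fix u v assume "u \<in> V" "v \<in> V" "{u,v} \<in> E"
    then show "(c' \<circ> g) u \<noteq> (c' \<circ> g) v" using c' T1 unfolding dynamic_4_coloring_def V'_def by auto
  next
    fix v assume v: "v \<in> V"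
    have cardeq: "card (g ` neighbors E v) = card (neighbors E v)"
      using inj_on_subset[OF g(2) nbV] by (simp add: card_image)
    have "g v \<in> V'" unfolding V'_def using v by simp
    then have "card (neighbors E' (g v)) \<le> 1 \<or>
        (\<exists>u\<in>neighbors E' (g v). \<exists>w\<in>neighbors E' (g v). c' u \<noteq> c' w)"
      using c' unfolding dynamic_4_coloring_def by blast
    then show "card (neighbors E v) \<le> 1 \<or>
        (\<exists>u\<in>neighbors E v. \<exists>w\<in>neighbors E v. (c' \<circ> g) u \<noteq> (c' \<circ> g) w)"
      unfolding nb[OF v] cardeq by auto
  qed
  then show ?thesis unfolding dyn4_colorable_def by blast
qed



definition col :: "nat \<Rightarrow> nat \<Rightarrow> nat" where
  "col k i = [0,1,2,3,1] ! ((i + 5 - k) mod 5)"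

lemma five: "(k::nat) < 5 \<Longrightarrow> k = 0 \<or> k = 1 \<or> k = 2 \<or> k = 3 \<or> k = 4" by arith

lemma col_edge: "k < 5 \<Longrightarrow> i < 5 \<Longrightarrow> col k i \<noteq> col k ((i+1) mod 5)"
  by (drule five)+ (elim disjE; simp add: col_def)

lemma col_happy: "k < 5 \<Longrightarrow> i < 5 \<Longrightarrow> i \<noteq> k \<Longrightarrow> col k ((i+1) mod 5) \<noteq> col k ((i+4) mod 5)"
  by (drule five)+ (elim disjE; simp add: col_def)

lemma col_lt: "col k i < 4"
proof -
  have "(i + 5 - k) mod 5 < 5" by simp
  then show ?thesis unfolding col_def by (drule_tac five) (elim disjE; simp)
qed

lemma c5_side:
  fixes T :: "'a set"
  assumes iso: "iso_C5 T ET" and x: "x \<in> T" and sub: "\<forall>e\<in>ET. e \<subseteq> T"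
  shows "\<exists>c::'a \<Rightarrow> nat. (\<forall>v\<in>T. c v < 4) \<and> (\<forall>u\<in>T. \<forall>v\<in>T. {u,v} \<in> ET \<longrightarrow> c u \<noteq> c v) \<and>
    (\<forall>v\<in>T-{x}. \<exists>u\<in>neighbors ET v. \<exists>w\<in>neighbors ET v. c u \<noteq> c w)"
proof -
  obtain f where f: "bij_betw f T C5_verts"
      "\<forall>u\<in>T. \<forall>v\<in>T. {u, v} \<in> ET \<longleftrightarrow> {f u, f v} \<in> C5_edges"
    using iso unfolding iso_C5_def graph_iso_def by blast
  have fT: "f ` T = {0..<5}" using f(1) unfolding bij_betw_def C5_verts_def by simp
  have finj: "inj_on f T" using f(1) unfolding bij_betw_def by simp
  define h where "h = inv_into T f"
  have hT: "j < 5 \<Longrightarrow> h j \<in> T" for j unfolding h_def using fT by (metis atLeastLessThan_iff inv_into_into zero_le)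
  have fh: "j < 5 \<Longrightarrow> f (h j) = j" for j unfolding h_def using fT by (simp add: f_inv_into_f)
  have flt: "v \<in> T \<Longrightarrow> f v < 5" for v using fT by auto
  have kx: "f x < 5" using flt x by simp
  define c where "c v = col (f x) (f v)" for v
  show ?thesis
  proof (intro exI[of _ c] conjI ballI impI)
    fix v show "c v < 4" unfolding c_def by (rule col_lt)
  next
    fix u v assume uv: "u \<in> T" "v \<in> T" "{u,v} \<in> ET"
    then have "{f u, f v} \<in> C5_edges" using f(2) by blast
    then obtain i where i: "i < 5" "{f u, f v} = {i, (i+1) mod 5}" unfolding C5_edges_def by blast
    then have "(f u = i \<and> f v = (i+1) mod 5) \<or> (f v = i \<and> f u = (i+1) mod 5)"
      by (auto simp: doubleton_eq_iff)
    then show "c u \<noteq> c v" unfolding c_def using col_edge[OF kx i(1)] by auto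
  next
    fix v assume v: "v \<in> T - {x}"
    have fv: "f v < 5" using v flt by simp
    have fvx: "f v \<noteq> f x" using v x finj by (metis DiffE inj_on_contraD singletonI)
    define u where "u = h ((f v + 1) mod 5)"
    define w where "w = h ((f v + 4) mod 5)"
    have uT: "u \<in> T" "f u = (f v + 1) mod 5" unfolding u_def using hT fh by auto
    have wT: "w \<in> T" "f w = (f v + 4) mod 5" unfolding w_def using hT fh by auto
    have "{f u, f v} \<in> C5_edges" unfolding C5_edges_def uT(2)
      using fv by (auto simp: insert_commute)
    then have "{u,v} \<in> ET" using f(2) uT(1) v by blast
    then have un: "u \<in> neighbors ET v" unfolding neighbors_def by simp
    have "((f v + 4) mod 5 + 1) mod 5 = f v" using five[OF fv] by (elim disjE; simp)
    then have "{f w, f v} \<in> C5_edges" unfolding C5_edges_def wT(2)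
      using fv by (auto intro!: exI[of _ "(f v + 4) mod 5"])
    then have "{w,v} \<in> ET" using f(2) wT(1) v by blast
    then have wn: "w \<in> neighbors ET v" unfolding neighbors_def by simp
    have "c u \<noteq> c w" unfolding c_def uT(2) wT(2) using col_happy[OF kx fv fvx] .
    then show "\<exists>u\<in>neighbors ET v. \<exists>w\<in>neighbors ET v. c u \<noteq> c w" using un wn by blast
  qed
qed



lemma reach:
  assumes sg: "simple_graph V E" and cg: "connected_graph V E" and x: "x \<in> V"
    and S: "S \<subseteq> V - {x}"
    and cl: "\<And>y z. y \<in> S \<Longrightarrow> {y,z} \<in> E \<Longrightarrow> z \<noteq> x \<Longrightarrow> z \<in> S"
    and w: "w \<in> S"
  shows "(\<lambda>a b. a \<in> insert x S \<and> b \<in> insert x S \<and> {a,b} \<in> E)\<^sup>*\<^sup>* w x"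
proof -
  let ?R = "\<lambda>a b. a \<in> insert x S \<and> b \<in> insert x S \<and> {a,b} \<in> E"
  have wV: "w \<in> V" using w S by blast
  have wx: "(\<lambda>a b. a \<in> V \<and> b \<in> V \<and> {a,b} \<in> E)\<^sup>*\<^sup>* w x"
    using cg wV x unfolding connected_graph_def connected_in_def by blast
  have "(t \<in> S \<and> ?R\<^sup>*\<^sup>* w t) \<or> ?R\<^sup>*\<^sup>* w x"
    if "(\<lambda>a b. a \<in> V \<and> b \<in> V \<and> {a,b} \<in> E)\<^sup>*\<^sup>* w t" for t
    using that
  proof (induction rule: rtranclp_induct)
    case base then show ?case using w by simp
  next
    case (step y z)
    then consider "y \<in> S" "?R\<^sup>*\<^sup>* w y" | "?R\<^sup>*\<^sup>* w x" by blast
    then show ?case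
    proof cases
      case 1
      show ?thesis
      proof (cases "z = x")
        case True
        then have "?R y x" using 1 step(2) by simp
        then show ?thesis using 1(2) by (simp add: True rtranclp.rtrancl_into_rtrancl)
      next
        case False
        then have "z \<in> S" using cl 1 step(2) by blast
        then have "?R y z" using 1 step(2) by simp
        have "?R\<^sup>*\<^sup>* w z" using 1(2) \<open>?R y z\<close> by (rule rtranclp.rtrancl_into_rtrancl)
        then show ?thesis using \<open>z \<in> S\<close> by blast
      qed
    next
      case 2 then show ?thesis by simp
    qed
  qed
  from this[OF wx] show ?thesis by blast
qed



lemma side:
  fixes V :: "'a set" and E :: "'a set set"
  assumes sg: "simple_graph V E" and cg: "connected_graph V E" and x: "x \<in> V"
    and S: "S \<subseteq> V - {x}" and Sne: "S \<noteq> {}"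
    and cl: "\<And>y z. y \<in> S \<Longrightarrow> {y,z} \<in> E \<Longrightarrow> z \<noteq> x \<Longrightarrow> z \<in> S"
    and e0: "e0 \<in> E" "\<not> e0 \<subseteq> insert x S"
    and nk: "\<not> has_K5_minor V E"
    and IH: "\<forall>(V' :: nat set) (E' :: nat set set).
           simple_graph V' E' \<and> connected_graph V' E' \<and> \<not> has_K5_minor V' E' \<and>
           \<not> iso_C5 V' E' \<and> card E' < card E \<longrightarrow> dyn4_colorable V' E'"
  shows "\<exists>c::'a \<Rightarrow> nat. (\<forall>v\<in>insert x S. c v < 4) \<and>
     (\<forall>u\<in>insert x S. \<forall>v\<in>insert x S. {u,v} \<in> E \<longrightarrow> c u \<noteq> c v) \<and>
     (\<forall>v\<in>S. card (neighbors E v) \<le> 1 \<or> (\<exists>u\<in>neighbors E v. \<exists>w\<in>neighbors E v. c u \<noteq> c w))"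
proof -
  define T where "T = insert x S"
  define ET where "ET = {e \<in> E. e \<subseteq> T}"
  have TV: "T \<subseteq> V" unfolding T_def using S x by blast
  have finV: "finite V" using sg unfolding simple_graph_def by blast
  have finE: "finite E"
  proof (rule finite_subset)
    show "E \<subseteq> Pow V" using edge_sub[OF sg] by blast
    show "finite (Pow V)" using finV by simp
  qed
  have ETiff: "{a,b} \<in> ET \<longleftrightarrow> {a,b} \<in> E" if "a \<in> T" "b \<in> T" for a b
    unfolding ET_def using that by simp
  have nbeq: "neighbors E v = neighbors ET v" if v: "v \<in> S" for v
  proof -
    have A: "u \<in> T" if "{u,v} \<in> E" for u
    proof (cases "u = x")
      case False
      then show ?thesis using cl[OF v, of u] that by (simp add: insert_commute T_def)
    qed (simp add: T_def)
    have "v \<in> T" using v T_def by simp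
    then show ?thesis unfolding neighbors_def ET_def using A by auto
  qed
  have sgT: "simple_graph T ET"
    unfolding simple_graph_def
  proof (intro conjI ballI)
    show "finite T" using finV TV by (rule rev_finite_subset)
    fix e assume "e \<in> ET"
    then have "e \<in> E" "e \<subseteq> T" unfolding ET_def by auto
    moreover obtain u v where "e = {u,v}" "u \<noteq> v"
      using sg \<open>e \<in> E\<close> unfolding simple_graph_def by blast
    ultimately show "\<exists>u v. e = {u, v} \<and> u \<in> T \<and> v \<in> T \<and> u \<noteq> v" by blast
  qed
  have sub: "\<forall>e\<in>ET. e \<subseteq> T" unfolding ET_def by blast
  have xT: "x \<in> T" unfolding T_def by simp
  have goal: "\<exists>c::'a \<Rightarrow> nat. (\<forall>v\<in>T. c v < 4) \<and> (\<forall>u\<in>T. \<forall>v\<in>T. {u,v} \<in> ET \<longrightarrow> c u \<noteq> c v) \<and>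
    (\<forall>v\<in>S. card (neighbors ET v) \<le> 1 \<or> (\<exists>u\<in>neighbors ET v. \<exists>w\<in>neighbors ET v. c u \<noteq> c w))"
  proof (cases "iso_C5 T ET")
    case True
    from c5_side[OF True xT sub] obtain c :: "'a \<Rightarrow> nat" where
      "(\<forall>v\<in>T. c v < 4)" "(\<forall>u\<in>T. \<forall>v\<in>T. {u,v} \<in> ET \<longrightarrow> c u \<noteq> c v)"
      "(\<forall>v\<in>T-{x}. \<exists>u\<in>neighbors ET v. \<exists>w\<in>neighbors ET v. c u \<noteq> c w)" by blast
    moreover have "S \<subseteq> T - {x}" using S T_def by blast
    ultimately show ?thesis by blast
  next
    case False
    have cgT: "connected_graph T ET"
      unfolding connected_graph_def connected_in_def
    proof (intro conjI ballI)
      show "T \<noteq> {}" using xT by blast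
      let ?R = "\<lambda>a b. a \<in> T \<and> b \<in> T \<and> {a, b} \<in> ET"
      have Req: "?R = (\<lambda>a b. a \<in> insert x S \<and> b \<in> insert x S \<and> {a,b} \<in> E)"
      proof (intro ext)
        fix a b show "?R a b = (a \<in> insert x S \<and> b \<in> insert x S \<and> {a,b} \<in> E)"
          using ETiff[of a b] unfolding T_def by blast
      qed
      have tox: "?R\<^sup>*\<^sup>* a x" if "a \<in> T" for a
      proof (cases "a = x")
        case False
        then have "a \<in> S" using that T_def by simp
        from reach[OF sg cg x S cl this] show ?thesis unfolding Req .
      qed simp
      have sym: "?R a b \<Longrightarrow> ?R b a" for a b by (simp add: insert_commute)
      fix a b assume "a \<in> T" "b \<in> T"
      then show "?R\<^sup>*\<^sup>* a b" using tox rtp_sym[OF tox sym] by (meson rtranclp_trans)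
    qed
    have nkT: "\<not> has_K5_minor T ET"
    proof
      assume "has_K5_minor T ET"
      then have "is_minor K5_verts K5_edges V E" unfolding has_K5_minor_def
        by (rule minor_hom[where h = id]) (use TV ET_def in auto)
      then show False using nk unfolding has_K5_minor_def by simp
    qed
    have "ET \<subset> E" using e0 unfolding ET_def T_def by blast
    then have "card ET < card E" using finE by (rule psubset_card_mono[rotated])
    then have "dyn4_colorable T ET" by (rule transfer_nat[OF sgT cgT nkT False IH])
    then obtain c where "dynamic_4_coloring T ET c" unfolding dyn4_colorable_def by blast
    then show ?thesis unfolding dynamic_4_coloring_def T_def by blast
  qed
  then obtain c :: "'a \<Rightarrow> nat" where c: "(\<forall>v\<in>T. c v < 4)" "(\<forall>u\<in>T. \<forall>v\<in>T. {u,v} \<in> ET \<longrightarrow> c u \<noteq> c v)"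
    "(\<forall>v\<in>S. card (neighbors ET v) \<le> 1 \<or> (\<exists>u\<in>neighbors ET v. \<exists>w\<in>neighbors ET v. c u \<noteq> c w))"
    by blast
  show ?thesis
  proof (intro exI[of _ c] conjI ballI impI)
    fix v assume "v \<in> insert x S" then show "c v < 4" using c(1) T_def by auto
  next
    fix u v assume "u \<in> insert x S" "v \<in> insert x S" "{u,v} \<in> E"
    then show "c u \<noteq> c v" using c(2) ETiff[of u v] unfolding T_def by blast
  next
    fix v assume "v \<in> S"
    then show "card (neighbors E v) \<le> 1 \<or> (\<exists>u\<in>neighbors E v. \<exists>w\<in>neighbors E v. c u \<noteq> c w)"
      using c(3) nbeq by simp
  qed
qed



definition sw :: "nat \<Rightarrow> nat \<Rightarrow> nat \<Rightarrow> nat" where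
  "sw a b z = (if z = a then b else if z = b then a else z)"

lemma sw_inv: "sw a b (sw a b z) = z" unfolding sw_def by auto

lemma sw_inj: "inj (sw a b)" by (metis injI sw_inv)

lemma sw_lt: "a < 4 \<Longrightarrow> b < 4 \<Longrightarrow> z < 4 \<Longrightarrow> sw a b z < (4::nat)" unfolding sw_def by auto

lemma small_col:
  assumes sg: "simple_graph V E" and ne: "V \<noteq> {}" and c2: "card V \<le> 2"
  shows "dyn4_colorable V E"
proof -
  obtain x0 where x0: "x0 \<in> V" using ne by blast
  have fin: "finite V" using sg unfolding simple_graph_def by blast
  define c :: "'a \<Rightarrow> nat" where "c w = (if w = x0 then 0 else 1)" for w
  have "dynamic_4_coloring V E c"
    unfolding dynamic_4_coloring_def
  proof (intro conjI ballI impI)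
    fix v show "c v < 4" unfolding c_def by simp
  next
    fix u v assume uv: "u \<in> V" "v \<in> V" "{u,v} \<in> E"
    have "u \<noteq> v" using edge_distinct(1)[OF sg uv(3)] .
    show "c u \<noteq> c v"
    proof (rule ccontr)
      assume "\<not> c u \<noteq> c v"
      then have "u \<noteq> x0" "v \<noteq> x0" using \<open>u \<noteq> v\<close> unfolding c_def by (auto split: if_splits)
      then have "card {u,v,x0} = 3" using \<open>u \<noteq> v\<close> by simp
      moreover have "card {u,v,x0} \<le> card V" using uv x0 fin by (intro card_mono) auto
      ultimately show False using c2 by simp
    qed
  next
    fix v assume v: "v \<in> V"
    have "neighbors E v \<subseteq> V - {v}"
      unfolding neighbors_def using edge_distinct[OF sg] by blast
    then have "card (neighbors E v) \<le> card (V - {v})" using fin by (intro card_mono) auto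
    also have "\<dots> \<le> 1" using v fin c2 by simp
    finally show "card (neighbors E v) \<le> 1 \<or>
        (\<exists>u\<in>neighbors E v. \<exists>w\<in>neighbors E v. c u \<noteq> c w)" by simp
  qed
  then show ?thesis unfolding dyn4_colorable_def by blast
qed



lemma ne_of_mem: "a \<in> A \<Longrightarrow> A \<noteq> {}" by blast

theorem lemma2p1:
  fixes V :: "'a set" and E :: "'a set set"
  assumes "simple_graph V E"
    and "connected_graph V E"
    and "\<not> has_K5_minor V E"
    and "\<not> iso_C5 V E"
    and "\<not> dyn4_colorable V E"
    and "\<forall>(V' :: nat set) (E' :: nat set set).
           simple_graph V' E' \<and> connected_graph V' E' \<and> \<not> has_K5_minor V' E' \<and>
           \<not> iso_C5 V' E' \<and> card E' < card E \<longrightarrow> dyn4_colorable V' E'"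
  shows "two_connected V E"
proof (rule ccontr)
  note sg = assms(1) and cg = assms(2) and nk = assms(3) and ndc = assms(5) and IH = assms(6)
  assume n2c: "\<not> two_connected V E"
  have Vne: "V \<noteq> {}" using cg unfolding connected_graph_def connected_in_def by blast
  have finV: "finite V" using sg unfolding simple_graph_def by blast
  have c3: "card V > 2"
  proof (rule ccontr)
    assume "\<not> card V > 2"
    then have "dyn4_colorable V E" using small_col[OF sg Vne] by simp
    then show False using ndc by simp
  qed
  have "\<not> (\<forall>x\<in>V. connected_graph (fst (del_vertex V E x)) (snd (del_vertex V E x)))"
    using n2c cg c3 unfolding two_connected_def by blast
  then obtain x where x: "x \<in> V" and ncx: "\<not> connected_graph (V - {x}) {e \<in> E. x \<notin> e}"
    unfolding del_vertex_def by auto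
  let ?R = "\<lambda>a b. a \<in> V - {x} \<and> b \<in> V - {x} \<and> {a, b} \<in> {e \<in> E. x \<notin> e}"
  have "card (V - {x}) > 0" using c3 x finV by simp
  then have "V - {x} \<noteq> {}" by (metis card.empty less_irrefl)
  then obtain u v where uv: "u \<in> V - {x}" "v \<in> V - {x}" "\<not> ?R\<^sup>*\<^sup>* u v"
    using ncx unfolding connected_graph_def connected_in_def by blast
  define C where "C = {w \<in> V - {x}. ?R\<^sup>*\<^sup>* u w}"
  define D where "D = V - {x} - C"
  have uC: "u \<in> C" unfolding C_def using uv by simp
  have vD: "v \<in> D" unfolding D_def C_def using uv by simp
  have CS: "C \<subseteq> V - {x}" and DS: "D \<subseteq> V - {x}" unfolding C_def D_def by auto
  have clC: "z \<in> C" if "y \<in> C" "{y,z} \<in> E" "z \<noteq> x" for y z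
  proof -
    have "z \<in> V" using edge_distinct(3)[OF sg that(2)] .
    moreover have "y \<noteq> x" using that(1) CS by blast
    ultimately have "?R y z" using that CS by auto
    then show ?thesis using that(1) \<open>z \<in> V\<close> \<open>z \<noteq> x\<close> unfolding C_def
      by (auto intro: rtranclp.rtrancl_into_rtrancl)
  qed
  have clD: "z \<in> D" if "y \<in> D" "{y,z} \<in> E" "z \<noteq> x" for y z
  proof (rule ccontr)
    assume "z \<notin> D"
    have "z \<in> V" using edge_distinct(3)[OF sg that(2)] .
    then have zC: "z \<in> C" using \<open>z \<notin> D\<close> that(3) unfolding D_def by blast
    have "{z,y} \<in> E" using that(2) by (simp add: insert_commute)
    then have "y \<in> C" using clC[OF zC] that(1) unfolding D_def by blast
    then show False using that(1) unfolding D_def by blast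
  qed
  have Vsplit: "V = insert x C \<union> D" unfolding D_def using x CS by blast
  have CD: "C \<inter> D = {}" unfolding D_def by blast
  have xC: "x \<notin> C" and xD: "x \<notin> D" using CS DS by auto
  have nbr: "\<exists>a\<in>S. {a,x} \<in> E" if S: "S \<subseteq> V - {x}" and cl: "\<And>y z. y \<in> S \<Longrightarrow> {y,z} \<in> E \<Longrightarrow> z \<noteq> x \<Longrightarrow> z \<in> S"
    and w: "w \<in> S" for S w
  proof -
    have r: "(\<lambda>a b. a \<in> insert x S \<and> b \<in> insert x S \<and> {a,b} \<in> E)\<^sup>*\<^sup>* w x"
      by (rule reach[OF sg cg x S cl w])
    have "w \<noteq> x" using w S by blast
    with r obtain y where "y \<in> insert x S" "{y,x} \<in> E"
      by (cases rule: rtranclp.cases) auto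
    moreover have "y \<noteq> x" using edge_distinct(1)[OF sg \<open>{y,x} \<in> E\<close>] .
    ultimately show ?thesis by blast
  qed
  have "\<exists>a\<in>C. {a,x} \<in> E" by (rule nbr[OF CS clC uC])
  then obtain a where a: "a \<in> C" "{a,x} \<in> E" ..
  have "\<exists>b\<in>D. {b,x} \<in> E" by (rule nbr[OF DS clD vD])
  then obtain b where b: "b \<in> D" "{b,x} \<in> E" ..
  have Cne: "C \<noteq> {}" using uC by (rule ne_of_mem)
  have Dne: "D \<noteq> {}" using vD by (rule ne_of_mem)
  have ebC: "\<not> {b,x} \<subseteq> insert x C" using b CD xD by blast
  have "\<exists>c::'a \<Rightarrow> nat. (\<forall>v\<in>insert x C. c v < 4) \<and> (\<forall>u\<in>insert x C. \<forall>v\<in>insert x C. {u,v} \<in> E \<longrightarrow> c u \<noteq> c v) \<and> (\<forall>v\<in>C. card (neighbors E v) \<le> 1 \<or> (\<exists>u\<in>neighbors E v. \<exists>w\<in>neighbors E v. c u \<noteq> c w))"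
    by (rule side[OF sg cg x CS Cne clC b(2) ebC nk IH])
  then obtain c1 :: "'a \<Rightarrow> nat" where c1all: "(\<forall>v\<in>insert x C. c1 v < 4) \<and> (\<forall>u\<in>insert x C. \<forall>v\<in>insert x C. {u,v} \<in> E \<longrightarrow> c1 u \<noteq> c1 v) \<and> (\<forall>v\<in>C. card (neighbors E v) \<le> 1 \<or> (\<exists>u\<in>neighbors E v. \<exists>w\<in>neighbors E v. c1 u \<noteq> c1 w))" ..
  note c1 = conjunct1[OF c1all] conjunct1[OF conjunct2[OF c1all]] conjunct2[OF conjunct2[OF c1all]]
  have eaD: "\<not> {a,x} \<subseteq> insert x D" using a CD xC by blast
  have "\<exists>c::'a \<Rightarrow> nat. (\<forall>v\<in>insert x D. c v < 4) \<and> (\<forall>u\<in>insert x D. \<forall>v\<in>insert x D. {u,v} \<in> E \<longrightarrow> c u \<noteq> c v) \<and> (\<forall>v\<in>D. card (neighbors E v) \<le> 1 \<or> (\<exists>u\<in>neighbors E v. \<exists>w\<in>neighbors E v. c u \<noteq> c w))"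
    by (rule side[OF sg cg x DS Dne clD a(2) eaD nk IH])
  then obtain c2 :: "'a \<Rightarrow> nat" where c2all: "(\<forall>v\<in>insert x D. c2 v < 4) \<and> (\<forall>u\<in>insert x D. \<forall>v\<in>insert x D. {u,v} \<in> E \<longrightarrow> c2 u \<noteq> c2 v) \<and> (\<forall>v\<in>D. card (neighbors E v) \<le> 1 \<or> (\<exists>u\<in>neighbors E v. \<exists>w\<in>neighbors E v. c2 u \<noteq> c2 w))" ..
  note c2 = conjunct1[OF c2all] conjunct1[OF conjunct2[OF c2all]] conjunct2[OF conjunct2[OF c2all]]
  define p where "p = c2 x"
  define P where "P = c1 x"
  define q where "q = c2 b"
  define q' where "q' = sw p P q"
  define t :: nat where "t = (if c1 x \<noteq> 0 \<and> c1 a \<noteq> 0 then 0 else if c1 x \<noteq> 1 \<and> c1 a \<noteq> 1 then 1 else 2)"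
  have t: "t < 4" "t \<noteq> P" "t \<noteq> c1 a" unfolding t_def P_def by auto
  define \<pi> where "\<pi> = sw q' t \<circ> sw p P"
  have lt: "p < 4" "P < 4" "q < 4" unfolding p_def P_def q_def using c1(1) c2(1) b(1) by auto
  have q'lt: "q' < 4" unfolding q'_def using sw_lt lt by simp
  have pilt: "\<pi> z < 4" if "z < 4" for z unfolding \<pi>_def using sw_lt lt q'lt t(1) that by simp
  have piinj: "inj \<pi>" unfolding \<pi>_def using sw_inj by (simp add: inj_compose)
  have pq: "p \<noteq> q" unfolding p_def q_def using c2(2) b by (simp add: insert_commute)
  have q'P: "q' \<noteq> P"
  proof
    assume "q' = P"
    then have "sw p P q = sw p P p" unfolding q'_def sw_def by simp
    then show False using pq sw_inj by (metis injD)
  qed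
  have pip: "\<pi> p = P" unfolding \<pi>_def sw_def using q'P t(2) by auto
  have piq: "\<pi> q = t" unfolding \<pi>_def q'_def by (simp add: sw_def)
  define c where "c w = (if w \<in> insert x C then c1 w else \<pi> (c2 w))" for w
  have cC: "c w = c1 w" if "w \<in> insert x C" for w using that c_def by simp
  have cD: "c w = \<pi> (c2 w)" if "w \<in> insert x D" for w
    using that CD xD pip unfolding c_def p_def P_def by auto
  have nbC: "neighbors E w \<subseteq> insert x C" if "w \<in> C" for w
    unfolding neighbors_def using clC[OF that] by (auto simp: insert_commute)
  have nbD: "neighbors E w \<subseteq> insert x D" if "w \<in> D" for w
    unfolding neighbors_def using clD[OF that] by (auto simp: insert_commute)
  have "dynamic_4_coloring V E c"
    unfolding dynamic_4_coloring_def
  proof (intro conjI ballI impI)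
    fix w assume "w \<in> V"
    then consider "w \<in> insert x C" | "w \<in> D" using Vsplit by blast
    then show "c w < 4"
      by cases (use cC cD c1(1) c2(1) pilt in auto)
  next
    fix u' v' assume uv': "u' \<in> V" "v' \<in> V" "{u',v'} \<in> E"
    have sym: "{v',u'} \<in> E" using uv'(3) by (simp add: insert_commute)
    have "(u' \<in> insert x C \<and> v' \<in> insert x C) \<or> (u' \<in> insert x D \<and> v' \<in> insert x D)"
      using uv' Vsplit clC[of u' v'] clC[of v' u'] clD[of u' v'] clD[of v' u'] sym by blast
    then show "c u' \<noteq> c v'"
    proof
      assume "u' \<in> insert x C \<and> v' \<in> insert x C"
      then show ?thesis using cC c1(2) uv'(3) by auto
    next
      assume h: "u' \<in> insert x D \<and> v' \<in> insert x D"
      then have "c2 u' \<noteq> c2 v'" using c2(2) uv'(3) by auto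
      then show ?thesis using cD h piinj by (simp add: inj_eq)
    qed
  next
    fix w assume "w \<in> V"
    then consider "w = x" | "w \<in> C" | "w \<in> D" using Vsplit by blast
    then show "card (neighbors E w) \<le> 1 \<or> (\<exists>u\<in>neighbors E w. \<exists>w'\<in>neighbors E w. c u \<noteq> c w')"
    proof cases
      case 1
      have "a \<in> neighbors E w" "b \<in> neighbors E w" using a b 1 unfolding neighbors_def by auto
      moreover have "c a \<noteq> c b" using cC[of a] cD[of b] a b piq t(3) unfolding q_def by auto
      ultimately show ?thesis by blast
    next
      case 2
      then show ?thesis using c1(3) nbC[OF 2] cC by (metis subsetD)
    next
      case 3
      have "c u \<noteq> c w'" if "u \<in> neighbors E w" "w' \<in> neighbors E w" "c2 u \<noteq> c2 w'" for u w'
        using that cD nbD[OF 3] piinj by (metis inj_eq subsetD)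
      then show ?thesis using c2(3) 3 by metis
    qed
  qed
  then show False using ndc unfolding dyn4_colorable_def by blast
qed


end
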